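(* Let $\mathbb{W}$ be a subgroup of the finite group $\mathbb{W}_3$ that contains $\mathbb{W}_3^{\mathfrak{A}}$, and let $G$ be a $\mathbb{W}$-invariant finite subgroup of $\mathbb{T}_3$. Then there exists $n\in\mathbb{N}$ such that one of the following three possibilities holds: \begin{enumerate} \item $G\cong\mu_n^3$; \item $n$ is even and $G\cong\mu_{n}^2\times\mu_{\frac{n}{2}}$; \item $n$ is divisible by $4$ and $G\cong\mu_{n}^2\times\mu_{\frac{n}{4}}$. \end{enumerate} Here $\mu_k$ denotes the cyclic group of order $k$.
   Context: Let $M_1=\mathbb{Z}^4/\langle h_1+h_2+h_3+h_4\rangle$ with the action of $\mathfrak{S}_4\times\mu_2$ where $\mathfrak{S}_4$ permutes the $h_i$ and the generator of $\mu_2$ acts as $-\mathrm{id}$. $M_3$ is the dual lattice of $M_1$ with the induced (contragredient) action of $\mathfrak{S}_4\times\mu_2$; equivalently $M_3$ is the root lattice of $A_3$ with its $\mathrm{Aut}(A_3)$-action. The image of this action in $\mathrm{GL}(M_3)\cong\mathrm{GL}_3(\mathbb{Z})$ is $\mathbb{W}_3$, and $\mathbb{W}_3^{\mathfrak{A}}$ is its unique subgroup isomorphic to $\mathfrak{A}_4$ (image of $\mathfrak{A}_4\times\{1\}$). $\mathbb{T}_3=\mathrm{Spec}\,\mathbb{C}[M_3]\cong\mathbb{G}_m^3$, on which $\mathrm{GL}(M_3)$ acts by group automorphisms via its action on characters. Concretely, $\mathbb{T}_3$ is the quotient of $\mathbb{T}_2=\mathbb{G}_m^3$ (coordinates $\mathsf{t}_1,\mathsf{t}_2,\mathsf{t}_3$)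 by the involution $(\mathsf{t}_1,\mathsf{t}_2,\mathsf{t}_3)\mapsto(-\mathsf{t}_1,-\mathsf{t}_2,-\mathsf{t}_3)$, with coordinates $\mathsf{t}_1\mathsf{t}_2,\mathsf{t}_1\mathsf{t}_3,\mathsf{t}_2\mathsf{t}_3$. *)

theory Defs
  imports "HOL-Algebra.Algebra" "HOL-Combinatorics.Permutations" "HOL-Library.Numeral_Type"
begin

text \<open>M_3: the dual of M_1 = Z^4 / <h1+h2+h3+h4>, realised as the sum-zero sublattice
  of Z^4 (the A_3 root lattice). Vectors of Z^4 are functions of type 4 => int.\<close>
definition M3 :: "(4 \<Rightarrow> int) set" where
  "M3 = {x. (\<Sum>i\<in>UNIV. x i) = 0}"

text \<open>Action of (sigma, eps) in S_4 x mu_2 on Z^4 (contragredient of the action on M_1):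
  permutation of coordinates and multiplication by eps = +1 / -1.\<close>
definition mact :: "(4 \<Rightarrow> 4) \<Rightarrow> int \<Rightarrow> (4 \<Rightarrow> int) \<Rightarrow> (4 \<Rightarrow> int)" where
  "mact s e x = (\<lambda>i. e * x (inv_into UNIV s i))"

text \<open>W_3: the image of S_4 x mu_2 in GL(M_3), elements as (extensional) maps M_3 -> M_3.\<close>
definition W3 :: "((4 \<Rightarrow> int) \<Rightarrow> (4 \<Rightarrow> int)) set" where
  "W3 = {restrict (mact s e) M3 | s e. s permutes UNIV \<and> (e = 1 \<or> e = -1)}"

definition W3A :: "((4 \<Rightarrow> int) \<Rightarrow> (4 \<Rightarrow> int)) set" where
  "W3A = {restrict (mact s 1) M3 | s. s permutes UNIV \<and> evenperm s}"

text \<open>Subgroups of W_3 (a finite group, so closure under composition and containing id suffices).\<close>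
definition is_subgroup_W3 :: "((4 \<Rightarrow> int) \<Rightarrow> (4 \<Rightarrow> int)) set \<Rightarrow> bool" where
  "is_subgroup_W3 W \<longleftrightarrow> W \<subseteq> W3 \<and> restrict id M3 \<in> W \<and>
     (\<forall>f\<in>W. \<forall>g\<in>W. compose M3 f g \<in> W)"

text \<open>The complex points of T_3 = Spec C[M_3]: group homomorphisms M_3 -> C^*,
  taken extensional (value 1 outside M_3), with pointwise multiplication.\<close>
definition T3_points :: "((4 \<Rightarrow> int) \<Rightarrow> complex) set" where
  "T3_points = {\<phi>. (\<forall>x\<in>M3. \<phi> x \<noteq> 0) \<and> (\<forall>x\<in>M3. \<forall>y\<in>M3. \<phi> (\<lambda>i. x i + y i) = \<phi> x * \<phi> y)
                   \<and> (\<forall>x. x \<notin> M3 \<longrightarrow> \<phi> x = 1)}"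

definition T3 :: "((4 \<Rightarrow> int) \<Rightarrow> complex) monoid" where
  "T3 = \<lparr>carrier = T3_points, monoid.mult = (\<lambda>\<phi> \<psi> x. \<phi> x * \<psi> x), one = (\<lambda>x. 1)\<rparr>"

text \<open>Action of g in GL(M_3) on T_3 via its action on characters: g . phi = phi o g^{-1}.\<close>
definition tact :: "((4 \<Rightarrow> int) \<Rightarrow> (4 \<Rightarrow> int)) \<Rightarrow> ((4 \<Rightarrow> int) \<Rightarrow> complex) \<Rightarrow> ((4 \<Rightarrow> int) \<Rightarrow> complex)" where
  "tact g \<phi> = (\<lambda>x. if x \<in> M3 then \<phi> (inv_into M3 g x) else 1)"

abbreviation mu :: "nat \<Rightarrow> int monoid" where
  "mu k \<equiv> integer_mod_group k"

end

theory Submission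
  imports Defs Complex_Main
begin


definition tm :: "complex \<times> complex \<times> complex \<Rightarrow> complex \<times> complex \<times> complex \<Rightarrow> complex \<times> complex \<times> complex" where
  "tm x y = (fst x * fst y, fst (snd x) * fst (snd y), snd (snd x) * snd (snd y))"
definition tinv :: "complex \<times> complex \<times> complex \<Rightarrow> complex \<times> complex \<times> complex" where
  "tinv x = (inverse (fst x), inverse (fst (snd x)), inverse (snd (snd x)))"
definition rot :: "complex \<times> complex \<times> complex \<Rightarrow> complex \<times> complex \<times> complex" where
  "rot x = (snd (snd x), fst x, fst (snd x))"
definition rho :: "complex \<times> complex \<times> complex \<Rightarrow> complex \<times> complex \<times> complex" where
  "rho x = (inverse (fst x), snd (snd x) * inverse (fst x), fst (snd x) * inverse (fst x))"
definition tpw :: "complex \<times> complex \<times> complex \<Rightarrow> nat \<Rightarrow> complex \<times> complex \<times> complex" where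
  "tpw x i = (fst x ^ i, fst (snd x) ^ i, snd (snd x) ^ i)"

lemma tm_simp[simp]: "tm (a,b,c) (a2,b2,c2) = (a * a2, b * b2, c * c2)" by (simp add: tm_def)
lemma tinv_simp[simp]: "tinv (a,b,c) = (inverse a, inverse b, inverse c)" by (simp add: tinv_def)
lemma rot_simp[simp]: "rot (a,b,c) = (c,a,b)" by (simp add: rot_def)
lemma rho_simp[simp]: "rho (a,b,c) = (inverse a, c * inverse a, b * inverse a)" by (simp add: rho_def)
lemma tpw_simp[simp]: "tpw (a,b,c) i = (a^i, b^i, c^i)" by (simp add: tpw_def)

lemma pow_card_eq_1:
  fixes H :: "complex set"
  assumes fin: "finite H" and mul: "\<And>x y. x \<in> H \<Longrightarrow> y \<in> H \<Longrightarrow> x * y \<in> H"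
    and inv: "\<And>x. x \<in> H \<Longrightarrow> inverse x \<in> H" and nz: "0 \<notin> H" and a: "a \<in> H"
  shows "a ^ card H = 1"
proof -
  have a0: "a \<noteq> 0" using a nz by auto
  have img: "(\<lambda>h. a * h) ` H = H"
  proof
    show "(\<lambda>h. a * h) ` H \<subseteq> H" using mul a by auto
    show "H \<subseteq> (\<lambda>h. a * h) ` H"
    proof
      fix h assume h: "h \<in> H"
      have "h = a * (inverse a * h)" using a0 by simp
      moreover have "inverse a * h \<in> H" using mul inv a h by auto
      ultimately show "h \<in> (\<lambda>h. a * h) ` H" by blast
    qed
  qed
  have inj: "inj_on (\<lambda>h. a * h) H" using a0 by (auto simp: inj_on_def)
  have "prod (\<lambda>h. h) H = prod (\<lambda>h. h) ((\<lambda>h. a * h) ` H)" using img by simp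
  also have "\<dots> = prod (\<lambda>h. a * h) H" using prod.reindex[OF inj] by simp
  also have "\<dots> = a ^ card H * prod (\<lambda>h. h) H" by (simp add: prod.distrib)
  finally have "prod (\<lambda>h. h) H = a ^ card H * prod (\<lambda>h. h) H" .
  moreover have "prod (\<lambda>h. h) H \<noteq> 0" using fin nz by (auto simp: prod_zero_iff)
  ultimately show ?thesis by simp
qed

lemma subgroup_roots:
  fixes H :: "complex set"
  assumes fin: "finite H" and mul: "\<And>x y. x \<in> H \<Longrightarrow> y \<in> H \<Longrightarrow> x * y \<in> H"
    and inv: "\<And>x. x \<in> H \<Longrightarrow> inverse x \<in> H" and nz: "0 \<notin> H" and ne: "1 \<in> H"
  shows "H = {z. z ^ card H = 1}" "card H > 0"
proof -
  show cp: "card H > 0" using fin ne card_gt_0_iff by blast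
  have sub: "H \<subseteq> {z. z ^ card H = 1}" using pow_card_eq_1[OF fin mul inv nz] by blast
  show "H = {z. z ^ card H = 1}"
    by (rule card_subset_eq[OF finite_roots_unity sub]) (use cp card_roots_unity_eq in auto)
qed

definition zeta :: "nat \<Rightarrow> complex" where "zeta n = cis (2 * pi / real n)"

lemma zeta_pow: "zeta n ^ j = cis (2 * pi * real j / real n)"
  by (simp add: zeta_def DeMoivre mult_ac)

lemma zeta_n: "n > 0 \<Longrightarrow> zeta n ^ n = 1"
  by (simp add: zeta_pow)

lemma zeta_nz[simp]: "zeta n \<noteq> 0" by (simp add: zeta_def)

lemma zeta_root: assumes "n > 0" "z ^ n = 1" shows "\<exists>j<n. z = zeta n ^ j"
proof -
  have "z \<in> (\<lambda>k. cis (2 * pi * real k / real n)) ` {..<n}"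
    using bij_betw_roots_unity[OF assms(1)] assms(2) by (auto simp: bij_betw_def)
  then show ?thesis by (auto simp: zeta_pow)
qed

lemma zeta_pow_mod: "n > 0 \<Longrightarrow> zeta n ^ j = zeta n ^ (j mod n)"
proof -
  assume n: "n > 0"
  have "zeta n ^ j = zeta n ^ (n * (j div n) + j mod n)" by simp
  also have "\<dots> = zeta n ^ (j mod n)" by (simp only: power_add power_mult zeta_n[OF n]) simp
  finally show ?thesis .
qed

lemma zeta_eq1: assumes n: "n > 0" shows "zeta n ^ j = 1 \<longleftrightarrow> n dvd j"
proof
  assume "n dvd j" then show "zeta n ^ j = 1" using zeta_n[OF n] by (auto simp: power_mult)
next
  assume h: "zeta n ^ j = 1"
  have inj: "inj_on (\<lambda>k. cis (2 * pi * real k / real n)) {..<n}"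
    using bij_betw_roots_unity[OF n] by (auto simp: bij_betw_def)
  have "zeta n ^ (j mod n) = zeta n ^ 0" using h zeta_pow_mod[OF n, of j] by simp
  then have "j mod n = 0" using inj_onD[OF inj, of "j mod n" 0] n by (simp add: zeta_pow)
  then show "n dvd j" by auto
qed



locale Qset =
  fixes Q :: "(complex \<times> complex \<times> complex) set"
  assumes fin: "finite Q" and one: "(1,1,1) \<in> Q"
    and mul: "x \<in> Q \<Longrightarrow> y \<in> Q \<Longrightarrow> tm x y \<in> Q"
    and inv: "x \<in> Q \<Longrightarrow> tinv x \<in> Q"
    and nz: "(a,b,c) \<in> Q \<Longrightarrow> a \<noteq> 0 \<and> b \<noteq> 0 \<and> c \<noteq> 0"
    and rotQ: "x \<in> Q \<Longrightarrow> rot x \<in> Q"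
    and rhoQ: "x \<in> Q \<Longrightarrow> rho x \<in> Q"
begin

definition "H = {a. (a,1,1) \<in> Q}"
definition "m = card H"
definition "A = fst ` Q"
definition "n = card A"

lemma tpwQ: "x \<in> Q \<Longrightarrow> tpw x i \<in> Q"
proof (induction i)
  case 0 then show ?case using one by (cases x) simp
next
  case (Suc i)
  then have "tm x (tpw x i) \<in> Q" using mul by blast
  then show ?case by (cases x) simp
qed

lemma H_props: "H = {z. z ^ m = 1}" "m > 0"
proof -
  have finH: "finite H"
  proof -
    have "H \<subseteq> fst ` Q" unfolding H_def by force
    then show ?thesis using fin finite_subset by blast
  qed
  have mH: "x \<in> H \<Longrightarrow> y \<in> H \<Longrightarrow> x * y \<in> H" for x y
    using mul[of "(x,1,1)" "(y,1,1)"] unfolding H_def by simp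
  have iH: "x \<in> H \<Longrightarrow> inverse x \<in> H" for x
    using inv[of "(x,1,1)"] unfolding H_def by simp
  have zH: "0 \<notin> H" using nz unfolding H_def by blast
  have oH: "1 \<in> H" using one unfolding H_def by simp
  show "H = {z. z ^ m = 1}" "m > 0" using subgroup_roots[OF finH mH iH zH oH] unfolding m_def by auto
qed

lemma A_props: "A = {z. z ^ n = 1}" "n > 0"
proof -
  have finA: "finite A" unfolding A_def using fin by simp
  have mA: "x \<in> A \<Longrightarrow> y \<in> A \<Longrightarrow> x * y \<in> A" for x y
  proof -
    assume "x \<in> A" "y \<in> A"
    then obtain p q where "p \<in> Q" "q \<in> Q" "x = fst p" "y = fst q" unfolding A_def by auto
    then show ?thesis using mul[of p q] unfolding A_def by (force simp: tm_def)
  qed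
  have iA: "x \<in> A \<Longrightarrow> inverse x \<in> A" for x
  proof -
    assume "x \<in> A"
    then obtain p where "p \<in> Q" "x = fst p" unfolding A_def by auto
    then show ?thesis using inv[of p] unfolding A_def by (force simp: tinv_def)
  qed
  have zA: "0 \<notin> A" using nz unfolding A_def by force
  have oA: "1 \<in> A" using one unfolding A_def by force
  show "A = {z. z ^ n = 1}" "n > 0" using subgroup_roots[OF finA mA iA zA oA] unfolding n_def by auto
qed

lemma Hm: "(a,1,1) \<in> Q \<longleftrightarrow> a ^ m = 1"
  using H_props(1) unfolding H_def by blast

lemma coords_n: assumes "(a,b,c) \<in> Q" shows "a ^ n = 1" "b ^ n = 1" "c ^ n = 1"
proof -
  have "a \<in> A" using assms unfolding A_def by force
  then show "a ^ n = 1" using A_props by auto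
  have "rot (rot (a,b,c)) \<in> Q" using rotQ[OF rotQ[OF assms]] .
  then have "b \<in> A" unfolding A_def by force
  then show "b ^ n = 1" using A_props by auto
  have "rot (a,b,c) \<in> Q" using rotQ[OF assms] .
  then have "c \<in> A" unfolding A_def by force
  then show "c ^ n = 1" using A_props by auto
qed

lemma Tm: assumes "a ^ m = 1" "b ^ m = 1" "c ^ m = 1" shows "(a,b,c) \<in> Q"
proof -
  have 1: "(a,1,1) \<in> Q" "(b,1,1) \<in> Q" "(c,1,1) \<in> Q" using assms Hm by auto
  have 2: "(1,b,1) \<in> Q" using rotQ[OF 1(2)] by simp
  have 3: "(1,1,c) \<in> Q" using rotQ[OF rotQ[OF 1(3)]] by simp
  show ?thesis using mul[OF mul[OF 1(1) 2] 3] by simp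
qed

lemma prod_m: assumes x: "(a,b,c) \<in> Q" shows "(a * b * c) ^ m = 1"
proof -
  have a: "a \<noteq> 0" "b \<noteq> 0" "c \<noteq> 0" using nz x by auto
  define p where "p = a * b * c"
  have p0: "p \<noteq> 0" using a p_def by simp
  have "tm (tm (a,b,c) (rot (a,b,c))) (rot (rot (a,b,c))) \<in> Q"
    using mul[OF mul[OF x rotQ[OF x]] rotQ[OF rotQ[OF x]]] .
  then have "(p, p, p) \<in> Q" unfolding p_def by (simp add: mult_ac)
  from inv[OF rhoQ[OF this]] have "(p,1,1) \<in> Q" using p0 by simp
  then show ?thesis using Hm p_def by blast
qed

lemma w_elem: assumes x: "(a,b,c) \<in> Q" shows "(1, a^2, a^2) \<in> Q"
proof -
  have a: "a \<noteq> 0" "b \<noteq> 0" "c \<noteq> 0" using nz x by auto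
  have p: "(a * b * c) ^ m = 1" using prod_m[OF x] .
  have "tm (a,b,c) (rho (a,b,c)) \<in> Q" using mul[OF x rhoQ[OF x]] .
  moreover have "(1, a * b * c, a * b * c) \<in> Q" using Tm p by simp
  ultimately have "tm (tm (a,b,c) (rho (a,b,c))) (tinv (1, a * b * c, a * b * c)) \<in> Q" using mul inv by metis
  moreover have "tm (tm (a,b,c) (rho (a,b,c))) (tinv (1, a * b * c, a * b * c)) = tinv (1, a^2, a^2)"
    using a by (simp add: field_simps power2_eq_square)
  ultimately have "tinv (1, a^2, a^2) \<in> Q" by simp
  from inv[OF this] show ?thesis using a by simp
qed

lemma pow4m: assumes x: "(a,b,c) \<in> Q" shows "a ^ (4*m) = 1"
proof -
  define t where "t = a^2"
  have u: "(1,t,t) \<in> Q" using w_elem[OF x] t_def by simp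
  have t0: "t \<noteq> 0" using nz x t_def by auto
  have "tm (tm (1,t,t) (rot (1,t,t))) (tinv (rot (rot (1,t,t)))) \<in> Q"
    using mul[OF mul[OF u rotQ[OF u]] inv[OF rotQ[OF rotQ[OF u]]]] .
  then have "(1,1,t^2) \<in> Q" using t0 by (simp add: power2_eq_square)
  then have "rot (1,1,t^2) \<in> Q" by (rule rotQ)
  then have "(t^2,1,1) \<in> Q" by simp
  then have "(t^2)^m = 1" using Hm by blast
  then show ?thesis unfolding t_def by (simp add: power_mult[symmetric] mult_ac)
qed

end


context Qset begin

lemma m_dvd_n: "m dvd n"
proof -
  have m0: "m > 0" using H_props by simp
  have "zeta m ^ m = 1" using zeta_n[OF m0] .
  then have "(zeta m, 1, 1) \<in> Q" using Hm by blast
  then have "zeta m ^ n = 1" using coords_n by blast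
  then show ?thesis using zeta_eq1[OF m0] by simp
qed

lemma n_dvd_4m: "n dvd 4 * m"
proof -
  have n0: "n > 0" using A_props by simp
  have "zeta n \<in> A" using A_props zeta_n[OF n0] by simp
  then obtain b c where x: "(zeta n, b, c) \<in> Q" unfolding A_def by force
  have "zeta n ^ (4*m) = 1" using pow4m[OF x] .
  then show ?thesis using zeta_eq1[OF n0] by simp
qed

lemma e_elems: "(zeta n, inverse (zeta n), 1) \<in> Q \<and> (zeta n, 1, inverse (zeta n)) \<in> Q"
proof -
  have n0: "n > 0" using A_props by simp
  define z where "z = zeta n"
  have z0: "z \<noteq> 0" unfolding z_def by simp
  have z4m: "(z ^ 4) ^ m = 1" using n_dvd_4m zeta_eq1[OF n0] unfolding z_def
    by (simp add: power_mult[symmetric])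
  have "z \<in> A" using A_props zeta_n[OF n0] z_def by simp
  then obtain b c where x: "(z, b, c) \<in> Q" unfolding A_def by force
  have "b ^ n = 1" using coords_n[OF x] by simp
  then obtain j where j: "b = z ^ j" using zeta_root[OF n0] z_def by blast
  define r where "r = j mod 4"
  define q where "q = j div 4"
  have r4: "r < 4" unfolding r_def by simp
  have bj: "b = z ^ r * (z ^ 4) ^ q" unfolding j r_def q_def
    by (simp add: power_add[symmetric] power_mult[symmetric])
  have sm: "((z ^ 4) ^ q) ^ m = 1" using z4m by (metis power_mult_distrib power_mult power_one mult.commute)
  have "(1, inverse ((z ^ 4) ^ q), 1) \<in> Q" using Tm sm by (simp add: power_inverse)
  from mul[OF x this] have y1: "(z, z ^ r, c) \<in> Q" using bj z0 by (simp add: mult.assoc)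
  define p where "p = z * z ^ r * c"
  have pm: "p ^ m = 1" using prod_m[OF y1] p_def by simp
  have "(1, 1, inverse p) \<in> Q" using Tm pm by (simp add: power_inverse)
  from mul[OF y1 this] have "(z, z ^ r, c * inverse p) \<in> Q" by simp
  moreover have "c * inverse p = inverse (z ^ Suc r)" using z0 nz[OF x] unfolding p_def
    by (simp add: field_simps)
  ultimately have y2: "(z, z ^ r, inverse (z ^ Suc r)) \<in> Q" by simp
  have w: "(1, z^2, z^2) \<in> Q" using w_elem[OF x] .
  have t1: "(1,1,z^4) \<in> Q" using Tm z4m by simp
  have t2: "(1,inverse (z^4),z^4) \<in> Q" using Tm z4m by (simp add: power_inverse)
  have "(z, inverse z, 1) \<in> Q \<or> (z, 1, inverse z) \<in> Q"
  proof -
    have "r = 0 \<or> r = 1 \<or> r = 2 \<or> r = 3" using r4 by auto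
    moreover {
      assume "r = 0"
      then have ?thesis using y2 by simp }
    moreover {
      assume "r = 1"
      then have Y: "(z, z, inverse (z^2)) \<in> Q" using y2 by (simp add: power2_eq_square)
      have "tm (tm (z, z, inverse (z^2)) (tinv (1, z^2, z^2))) (1,1,z^4) = (z, inverse z, 1)"
        using z0 by (simp add: field_simps eval_nat_numeral)
      then have ?thesis using mul[OF mul[OF Y inv[OF w]] t1] by simp
      }
    moreover {
      assume "r = 2"
      then have Y: "(z, z^2, inverse (z^3)) \<in> Q" using y2 by (simp add: eval_nat_numeral)
      have "tm (tm (z, z^2, inverse (z^3)) (tinv (1, z^2, z^2))) (1,1,z^4) = (z, 1, inverse z)"
        using z0 by (simp add: field_simps eval_nat_numeral)
      then have ?thesis using mul[OF mul[OF Y inv[OF w]] t1] by simp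
      }
    moreover {
      assume "r = 3"
      then have Y: "(z, z^3, inverse (z^4)) \<in> Q" using y2 by (simp add: eval_nat_numeral)
      have "tm (z, z^3, inverse (z^4)) (1,inverse (z^4),z^4) = (z, inverse z, 1)"
        using z0 by (simp add: field_simps eval_nat_numeral)
      then have ?thesis using mul[OF Y t2] by simp
      }
    ultimately show ?thesis by blast
  qed
  then have "(z, inverse z, 1) \<in> Q \<and> (z, 1, inverse z) \<in> Q"
  proof
    assume e1: "(z, inverse z, 1) \<in> Q"
    have "tinv (rot (rot (z, inverse z, 1))) \<in> Q" using inv[OF rotQ[OF rotQ[OF e1]]] .
    then show ?thesis using e1 by simp
  next
    assume e2: "(z, 1, inverse z) \<in> Q"
    have "tinv (rot (z, 1, inverse z)) \<in> Q" using inv[OF rotQ[OF e2]] .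
    then show ?thesis using e2 by simp
  qed
  then show ?thesis unfolding z_def .
qed

end


context Qset begin

lemma Q_eq: "Q = {(a,b,c). a ^ n = 1 \<and> b ^ n = 1 \<and> c ^ n = 1 \<and> (a * b * c) ^ m = 1}"
proof
  show "Q \<subseteq> {(a,b,c). a ^ n = 1 \<and> b ^ n = 1 \<and> c ^ n = 1 \<and> (a * b * c) ^ m = 1}"
    using coords_n prod_m by auto
next
  show "{(a,b,c). a ^ n = 1 \<and> b ^ n = 1 \<and> c ^ n = 1 \<and> (a * b * c) ^ m = 1} \<subseteq> Q"
  proof clarify
    fix a b c :: complex
    assume h: "a ^ n = 1" "b ^ n = 1" "c ^ n = 1" "(a * b * c) ^ m = 1"
    have n0: "n > 0" using A_props by simp
    define z where "z = zeta n"
    have z0: "z \<noteq> 0" unfolding z_def by simp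
    obtain i where i: "a = z ^ i" using zeta_root[OF n0 h(1)] z_def by blast
    obtain j where j: "b = z ^ j" using zeta_root[OF n0 h(2)] z_def by blast
    have e1: "(z, inverse z, 1) \<in> Q" and e2: "(z, 1, inverse z) \<in> Q" using e_elems z_def by auto
    have f: "(1, z, inverse z) \<in> Q" using rotQ[OF e1] by simp
    have "(1, 1, c * z ^ (i + j)) \<in> Q" using Tm h(4) i j by (simp add: power_add mult_ac)
    from mul[OF mul[OF tpwQ[OF e1, of i] tpwQ[OF f, of "i+j"]] this]
    have "tm (tm (tpw (z, inverse z, 1) i) (tpw (1, z, inverse z) (i + j))) (1, 1, c * z ^ (i + j)) \<in> Q" .
    moreover have "tm (tm (tpw (z, inverse z, 1) i) (tpw (1, z, inverse z) (i + j))) (1, 1, c * z ^ (i + j)) = (a,b,c)"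
    proof -
      have ip: "inverse z ^ t * z ^ t = 1" for t using z0 by (simp add: power_mult_distrib[symmetric])
      have "inverse z ^ i * z ^ (i + j) = (inverse z ^ i * z ^ i) * z ^ j" by (simp add: power_add mult_ac)
      then have 2: "inverse z ^ i * z ^ (i + j) = b" using ip j by simp
      have "inverse z ^ (i + j) * (c * z ^ (i + j)) = (inverse z ^ (i + j) * z ^ (i + j)) * c" by (simp add: mult_ac)
      then have 3: "inverse z ^ (i + j) * (c * z ^ (i + j)) = c" using ip by simp
      show ?thesis using 2 3 i by simp
    qed
    ultimately show "(a,b,c) \<in> Q" by metis
  qed
qed

lemma k_cases: "\<exists>k. (k = 1 \<or> k = 2 \<or> k = 4) \<and> n = k * m"
proof -
  obtain k where k: "n = m * k" using m_dvd_n by (auto simp: dvd_def)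
  have m0: "m > 0" using H_props by simp
  have "m * k dvd m * 4" using n_dvd_4m k by (simp add: mult.commute)
  then have "k dvd 4" using m0 by simp
  then have "k \<le> 4" "k > 0" by (auto dest: dvd_imp_le intro: Nat.gr0I)
  moreover have "k \<noteq> 3" using \<open>k dvd 4\<close> by auto
  ultimately have "k = 1 \<or> k = 2 \<or> k = 4" by (cases k; cases "k-1"; cases "k-2"; cases "k-3") auto
  then show ?thesis using k by (auto simp: mult.commute)
qed

end


lemma zeta_powi_mod: assumes n: "n > 0" shows "zeta n powi x = zeta n ^ nat (x mod int n)"
proof -
  have x: "x = int n * (x div int n) + x mod int n" by simp
  have "zeta n powi x = zeta n powi (int n * (x div int n)) * zeta n powi (x mod int n)"
    by (subst x, rule power_int_add) simp
  also have "zeta n powi (int n * (x div int n)) = 1"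
    by (simp add: power_int_mult zeta_n[OF n])
  also have "zeta n powi (x mod int n) = zeta n ^ nat (x mod int n)"
    using n by (simp add: power_int_def)
  finally show ?thesis by simp
qed

lemma zeta_pow_inj: assumes n: "n > 0" and "a < n" "b < n" "zeta n ^ a = zeta n ^ b" shows "a = b"
proof -
  have inj: "inj_on (\<lambda>k. cis (2 * pi * real k / real n)) {..<n}"
    using bij_betw_roots_unity[OF n] by (auto simp: bij_betw_def)
  show ?thesis using inj_onD[OF inj, of a b] assms by (simp add: zeta_pow)
qed

lemma zeta_powi_eq: assumes n: "n > 0" shows "zeta n powi x = zeta n powi y \<longleftrightarrow> x mod int n = y mod int n"
proof
  assume "x mod int n = y mod int n" then show "zeta n powi x = zeta n powi y"
    using zeta_powi_mod[OF n] by simp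
next
  assume h: "zeta n powi x = zeta n powi y"
  have "nat (x mod int n) < n" using n by (simp add: nat_less_iff)
  moreover have "nat (y mod int n) < n" using n by (simp add: nat_less_iff)
  ultimately have "nat (x mod int n) = nat (y mod int n)"
    using zeta_pow_inj[OF n] h zeta_powi_mod[OF n] by metis
  moreover have "x mod int n \<ge> 0" "y mod int n \<ge> 0" using n by simp_all
  ultimately show "x mod int n = y mod int n" by (metis int_nat_eq)
qed

definition trip :: "nat \<Rightarrow> nat \<Rightarrow> int \<times> int \<times> int \<Rightarrow> complex \<times> complex \<times> complex" where
  "trip n k x = (zeta n powi fst x, zeta n powi fst (snd x), zeta n powi (int k * snd (snd x) - fst x - fst (snd x)))"

definition Sset :: "nat \<Rightarrow> nat \<Rightarrow> (complex \<times> complex \<times> complex) set" where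
  "Sset n m = {(a,b,c). a ^ n = 1 \<and> b ^ n = 1 \<and> c ^ n = 1 \<and> (a * b * c) ^ m = 1}"

lemma zeta_powi_n: "n > 0 \<Longrightarrow> (zeta n powi x) ^ n = 1"
  by (simp add: zeta_powi_mod power_mult[symmetric] mult.commute) (simp add: power_mult zeta_n)

lemma powi3: "(z::complex) \<noteq> 0 \<Longrightarrow> z powi a * z powi b * z powi c = z powi (a + b + c)"
  by (simp add: power_int_add)

lemma trip_in: assumes "n = k * m" "m > 0" "k > 0"
  shows "trip n k (i,j,l) \<in> Sset n m"
proof -
  have n: "n > 0" using assms by simp
  have z0: "zeta n \<noteq> 0" by simp
  have "zeta n powi i * zeta n powi j * zeta n powi (int k * l - i - j) = zeta n powi (int k * l)"
  proof -
    have "zeta n powi i * zeta n powi j * zeta n powi (int k * l - i - j) = zeta n powi (i + j + (int k * l - i - j))"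
      using z0 powi3 by metis
    moreover have "i + j + (int k * l - i - j) = int k * l" by simp
    ultimately show ?thesis by metis
  qed
  moreover have "(zeta n powi (int k * l)) ^ m = 1"
  proof -
    have "(zeta n powi (int k * l)) ^ m = zeta n powi (int k * l * int m)"
      by (simp add: power_int_mult flip: power_int_of_nat)
    also have "\<dots> = (zeta n powi int n) powi l" using assms
      by (simp add: power_int_mult[symmetric] mult_ac)
    also have "\<dots> = 1" using zeta_n[OF n] by simp
    finally show ?thesis .
  qed
  ultimately show ?thesis unfolding trip_def Sset_def using zeta_powi_n[OF n] by simp
qed



lemma km_dvd: "int k * int m dvd int k * (x mod int m) - int k * x"
proof -
  have "int m dvd x mod int m - x" by (simp add: mod_eq_dvd_iff[symmetric])
  then have "int k * int m dvd int k * (x mod int m - x)" by (rule mult_dvd_mono[OF dvd_refl])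
  then show ?thesis by (simp add: right_diff_distrib)
qed

lemma n_dvd_mod: "int n dvd x mod int n - x"
  by (simp add: mod_eq_dvd_iff[symmetric])

lemma trip_hom: assumes nkm: "n = k * m" and m: "m > 0" and k: "k > 0"
  shows "trip n k ((i + i') mod int n, (j + j') mod int n, (l + l') mod int m)
       = tm (trip n k (i,j,l)) (trip n k (i',j',l'))"
proof -
  have n: "n > 0" using assms by simp
  have z0: "zeta n \<noteq> 0" by simp
  have 1: "zeta n powi ((i + i') mod int n) = zeta n powi i * zeta n powi i'"
    using zeta_powi_eq[OF n] z0 by (simp add: power_int_add[symmetric])
  have 2: "zeta n powi ((j + j') mod int n) = zeta n powi j * zeta n powi j'"
    using zeta_powi_eq[OF n] z0 by (simp add: power_int_add[symmetric])
  have "int n dvd (int k * ((l + l') mod int m) - (i + i') mod int n - (j + j') mod int n)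
        - ((int k * l - i - j) + (int k * l' - i' - j'))"
  proof -
    have a: "int n dvd int k * ((l + l') mod int m) - int k * (l + l')"
      using km_dvd[of k m "l + l'"] nkm by simp
    have b: "int n dvd (i + i') mod int n - (i + i')" by (rule n_dvd_mod)
    have c: "int n dvd (j + j') mod int n - (j + j')" by (rule n_dvd_mod)
    have "(int k * ((l + l') mod int m) - (i + i') mod int n - (j + j') mod int n)
        - ((int k * l - i - j) + (int k * l' - i' - j'))
        = (int k * ((l + l') mod int m) - int k * (l + l')) - ((i + i') mod int n - (i + i'))
          - ((j + j') mod int n - (j + j'))" by (simp add: algebra_simps)
    then show ?thesis using a b c by (metis dvd_diff)
  qed
  then have "zeta n powi (int k * ((l + l') mod int m) - (i + i') mod int n - (j + j') mod int n)
      = zeta n powi ((int k * l - i - j) + (int k * l' - i' - j'))"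
    using zeta_powi_eq[OF n] mod_eq_dvd_iff by blast
  also have "\<dots> = zeta n powi (int k * l - i - j) * zeta n powi (int k * l' - i' - j')"
    by (rule power_int_add) (simp add: z0)
  finally have 3: "zeta n powi (int k * ((l + l') mod int m) - (i + i') mod int n - (j + j') mod int n)
      = zeta n powi (int k * l - i - j) * zeta n powi (int k * l' - i' - j')" .
  show ?thesis unfolding trip_def using 1 2 3 by simp
qed

lemma trip_inj: assumes nkm: "n = k * m" and m: "m > 0" and k: "k > 0"
  and box: "0 \<le> i" "i < int n" "0 \<le> j" "j < int n" "0 \<le> l" "l < int m"
           "0 \<le> i'" "i' < int n" "0 \<le> j'" "j' < int n" "0 \<le> l'" "l' < int m"
  and eq: "trip n k (i,j,l) = trip n k (i',j',l')"
  shows "i = i' \<and> j = j' \<and> l = l'"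
proof -
  have n: "n > 0" using assms by simp
  have "i mod int n = i' mod int n" "j mod int n = j' mod int n"
    using eq zeta_powi_eq[OF n] unfolding trip_def by auto
  then have ij: "i = i'" "j = j'" using box by simp_all
  have "(int k * l - i - j) mod int n = (int k * l' - i' - j') mod int n"
    using eq zeta_powi_eq[OF n] unfolding trip_def by auto
  then have "int n dvd (int k * l - i - j) - (int k * l' - i' - j')" using mod_eq_dvd_iff by blast
  then have "int k * int m dvd int k * (l - l')" using ij nkm by (simp add: algebra_simps)
  then have "int m dvd l - l'" using k by simp
  then have "l mod int m = l' mod int m" using mod_eq_dvd_iff by blast
  then have "l = l'" using box by simp
  then show ?thesis using ij by simp
qed

lemma trip_surj: assumes nkm: "n = k * m" and m: "m > 0" and k: "k > 0"
  and S: "y \<in> Sset n m"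
  shows "\<exists>i j l. 0 \<le> i \<and> i < int n \<and> 0 \<le> j \<and> j < int n \<and> 0 \<le> l \<and> l < int m \<and> trip n k (i,j,l) = y"
proof -
  have n: "n > 0" using assms by simp
  obtain a b c where y: "y = (a,b,c)" by (cases y)
  have h: "a ^ n = 1" "b ^ n = 1" "c ^ n = 1" "(a * b * c) ^ m = 1" using S y unfolding Sset_def by auto
  obtain i where i: "i < n" "a = zeta n ^ i" using zeta_root[OF n h(1)] by blast
  obtain j where j: "j < n" "b = zeta n ^ j" using zeta_root[OF n h(2)] by blast
  obtain d where d: "d < n" "c = zeta n ^ d" using zeta_root[OF n h(3)] by blast
  have "zeta n ^ ((i + j + d) * m) = 1" using h(4) i j d by (simp add: power_add power_mult)
  then have "k * m dvd (i + j + d) * m" using zeta_eq1[OF n] nkm by simp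
  then have "k dvd i + j + d" using m by simp
  then obtain t where t: "i + j + d = k * t" by (auto simp: dvd_def)
  define l where "l = int t mod int m"
  have "int n dvd (int k * l - int i - int j) - int d"
  proof -
    have "int n dvd int k * l - int k * int t" using km_dvd[of k m "int t"] nkm l_def by simp
    moreover have "int k * l - int i - int j - int d = int k * l - int k * int t"
      using t by (simp add: algebra_simps flip: of_nat_add of_nat_mult)
    ultimately show ?thesis by metis
  qed
  then have "zeta n powi (int k * l - int i - int j) = zeta n powi (int d)"
    using zeta_powi_eq[OF n] mod_eq_dvd_iff by blast
  then have "trip n k (int i, int j, l) = y" using y i j d unfolding trip_def by (simp add: power_int_of_nat)
  moreover have "0 \<le> l" "l < int m" using m l_def by simp_all
  ultimately show ?thesis using i(1) j(1) by (intro exI[of _ "int i"] exI[of _ "int j"] exI[of _ l]) auto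
qed



lemma ex4: fixes x :: 4 shows "x = 0 \<or> x = 1 \<or> x = 2 \<or> x = 3"
proof (induct x)
  case (of_int z)
  then have "z = 0 \<or> z = 1 \<or> z = 2 \<or> z = 3" by fastforce
  then show ?case by auto
qed

lemma UNIV4: "(UNIV :: 4 set) = {0,1,2,3}" using ex4 by auto

lemma distinct4: "(0::4) \<noteq> 1" "(0::4) \<noteq> 2" "(0::4) \<noteq> 3" "(1::4) \<noteq> 2" "(1::4) \<noteq> 3" "(2::4) \<noteq> 3"
  by simp_all

lemma sum4: "(\<Sum>i\<in>(UNIV::4 set). f i) = f 0 + f 1 + f 2 + (f 3 :: int)"
  unfolding UNIV4 by (simp add: distinct4 add.assoc)

lemma M3_iff: "v \<in> M3 \<longleftrightarrow> v 0 + v 1 + v 2 + v 3 = 0"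
  unfolding M3_def using sum4[of v] by simp

definition dv :: "4 \<Rightarrow> 4 \<Rightarrow> int" where
  "dv i = (\<lambda>j. if j = i then 1 else if j = 3 then -1 else 0)"

lemma dv_vals:
  "dv 0 0 = 1" "dv 0 1 = 0" "dv 0 2 = 0" "dv 0 3 = -1"
  "dv 1 0 = 0" "dv 1 1 = 1" "dv 1 2 = 0" "dv 1 3 = -1"
  "dv 2 0 = 0" "dv 2 1 = 0" "dv 2 2 = 1" "dv 2 3 = -1"
  by (simp_all add: dv_def distinct4 distinct4[symmetric])

lemma dv_M3: "dv 0 \<in> M3" "dv 1 \<in> M3" "dv 2 \<in> M3"
  by (simp_all add: M3_iff dv_vals)

definition Xc :: "((4 \<Rightarrow> int) \<Rightarrow> complex) \<Rightarrow> complex \<times> complex \<times> complex" where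
  "Xc \<phi> = (\<phi> (dv 0), \<phi> (dv 1), \<phi> (dv 2))"

definition pt :: "complex \<times> complex \<times> complex \<Rightarrow> (4 \<Rightarrow> int) \<Rightarrow> complex" where
  "pt y = (\<lambda>v. if v \<in> M3 then fst y powi v 0 * fst (snd y) powi v 1 * snd (snd y) powi v 2 else 1)"

lemma M3_add: "v \<in> M3 \<Longrightarrow> w \<in> M3 \<Longrightarrow> (\<lambda>i. v i + w i) \<in> M3"
  by (simp add: M3_iff)

lemma M3_scale: "v \<in> M3 \<Longrightarrow> (\<lambda>i. c * v i) \<in> M3"
  by (simp add: M3_iff) (metis distrib_left mult_zero_right)

lemma pt_T3: assumes "a \<noteq> 0" "b \<noteq> 0" "c \<noteq> 0" shows "pt (a,b,c) \<in> T3_points"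
  unfolding T3_points_def pt_def using assms M3_add by (auto simp: power_int_add)

lemma X_pt: assumes "a \<noteq> 0" "b \<noteq> 0" "c \<noteq> 0" shows "Xc (pt (a,b,c)) = (a,b,c)"
  unfolding Xc_def pt_def using dv_M3 by (simp add: dv_vals)

lemma phi_hom: "\<phi> \<in> T3_points \<Longrightarrow> x \<in> M3 \<Longrightarrow> y \<in> M3 \<Longrightarrow> \<phi> (\<lambda>i. x i + y i) = \<phi> x * \<phi> y"
  unfolding T3_points_def by blast

lemma phi_nz: "\<phi> \<in> T3_points \<Longrightarrow> x \<in> M3 \<Longrightarrow> \<phi> x \<noteq> 0"
  unfolding T3_points_def by blast

lemma phi0: assumes "\<phi> \<in> T3_points" shows "\<phi> (\<lambda>i. 0) = 1"
proof -
  have z: "(\<lambda>i::4. 0::int) \<in> M3" by (simp add: M3_iff)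
  have "\<phi> (\<lambda>i. 0 + 0) = \<phi> (\<lambda>i. 0) * \<phi> (\<lambda>i. 0)" using phi_hom[OF assms z z] .
  moreover have "\<phi> (\<lambda>i. 0) \<noteq> 0" using phi_nz[OF assms z] .
  ultimately show ?thesis by simp
qed

lemma phi_nat: assumes "\<phi> \<in> T3_points" "w \<in> M3" shows "\<phi> (\<lambda>i. int c * w i) = \<phi> w ^ c"
proof (induction c)
  case 0 then show ?case using phi0[OF assms(1)] by simp
next
  case (Suc c)
  have "(\<lambda>i. int (Suc c) * w i) = (\<lambda>i. w i + int c * w i)" by (simp add: algebra_simps)
  moreover have "\<phi> (\<lambda>i. w i + int c * w i) = \<phi> w * \<phi> (\<lambda>i. int c * w i)"
    using phi_hom[OF assms(1) assms(2) M3_scale[OF assms(2)]] .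
  ultimately show ?case using Suc by simp
qed

lemma phi_int: assumes "\<phi> \<in> T3_points" "w \<in> M3" shows "\<phi> (\<lambda>i. c * w i) = \<phi> w powi c"
proof (cases "c \<ge> 0")
  case True
  then obtain k where "c = int k" using nonneg_int_cases by blast
  then show ?thesis using phi_nat[OF assms] by (simp add: power_int_of_nat)
next
  case False
  define k where "k = nat (- c)"
  have k: "c = - int k" using False k_def by simp
  have s1: "(\<lambda>i. - int k * w i) \<in> M3" "(\<lambda>i. int k * w i) \<in> M3" using M3_scale[OF assms(2)] by blast+
  have "\<phi> (\<lambda>i. - int k * w i + int k * w i) = \<phi> (\<lambda>i. - int k * w i) * \<phi> (\<lambda>i. int k * w i)"
    using phi_hom[OF assms(1) s1] .
  then have "1 = \<phi> (\<lambda>i. - int k * w i) * \<phi> w ^ k" using phi0[OF assms(1)] phi_nat[OF assms] by simp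
  then have "\<phi> w ^ k * \<phi> (\<lambda>i. - int k * w i) = 1" by (simp add: mult.commute)
  then have "\<phi> (\<lambda>i. - int k * w i) = inverse (\<phi> w ^ k)" by (rule inverse_unique[symmetric])
  then show ?thesis using k by (simp add: power_int_minus power_int_of_nat)
qed

lemma pt_X: assumes "\<phi> \<in> T3_points" shows "pt (Xc \<phi>) = \<phi>"
proof
  fix v
  show "pt (Xc \<phi>) v = \<phi> v"
  proof (cases "v \<in> M3")
    case False then show ?thesis using assms unfolding pt_def T3_points_def by auto
  next
    case True
    have v: "v = (\<lambda>i. v 0 * dv 0 i + (v 1 * dv 1 i + v 2 * dv 2 i))"
    proof
      fix i :: 4
      have "v 3 = - v 0 - v 1 - v 2" using True by (simp add: M3_iff)
      then show "v i = v 0 * dv 0 i + (v 1 * dv 1 i + v 2 * dv 2 i)"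
        using ex4[of i] by (auto simp: dv_vals)
    qed
    have m: "(\<lambda>i. v 0 * dv 0 i) \<in> M3" "(\<lambda>i. v 1 * dv 1 i) \<in> M3" "(\<lambda>i. v 2 * dv 2 i) \<in> M3"
      using M3_scale dv_M3 by blast+
    have "\<phi> v = \<phi> (\<lambda>i. v 0 * dv 0 i) * (\<phi> (\<lambda>i. v 1 * dv 1 i) * \<phi> (\<lambda>i. v 2 * dv 2 i))"
      by (subst v, subst phi_hom[OF assms m(1) M3_add[OF m(2) m(3)]], subst phi_hom[OF assms m(2) m(3)]) (rule refl)
    also have "\<dots> = \<phi> (dv 0) powi v 0 * (\<phi> (dv 1) powi v 1 * \<phi> (dv 2) powi v 2)"
      using phi_int[OF assms] dv_M3 by simp
    finally show ?thesis using True unfolding pt_def Xc_def by (simp add: mult.assoc)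
  qed
qed



lemma T3_carrier[simp]: "carrier T3 = T3_points" by (simp add: T3_def)
lemma T3_mult[simp]: "\<phi> \<otimes>\<^bsub>T3\<^esub> \<psi> = (\<lambda>x. \<phi> x * \<psi> x)" by (simp add: T3_def)
lemma T3_one[simp]: "\<one>\<^bsub>T3\<^esub> = (\<lambda>x. 1)" by (simp add: T3_def)

lemma T3_mclosed: "\<phi> \<in> T3_points \<Longrightarrow> \<psi> \<in> T3_points \<Longrightarrow> (\<lambda>x. \<phi> x * \<psi> x) \<in> T3_points"
  unfolding T3_points_def by (auto simp: mult_ac)

lemma T3_group: "group T3"
proof (rule groupI)
  show "\<one>\<^bsub>T3\<^esub> \<in> carrier T3" by (simp add: T3_points_def)
next
  fix x assume x: "x \<in> carrier T3"
  have x': "x \<in> T3_points" using x by simp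
  have "(\<lambda>v. inverse (x v)) \<in> T3_points" using x' unfolding T3_points_def by auto
  moreover have "(\<lambda>v. inverse (x v) * x v) = (\<lambda>v. 1)"
  proof
    fix v show "inverse (x v) * x v = 1"
      using x' unfolding T3_points_def by (cases "v \<in> M3") auto
  qed
  ultimately show "\<exists>y\<in>carrier T3. y \<otimes>\<^bsub>T3\<^esub> x = \<one>\<^bsub>T3\<^esub>" by force
qed (auto simp: T3_mclosed mult_ac)

lemma inv_T3: assumes "\<phi> \<in> T3_points" shows "Xc (inv\<^bsub>T3\<^esub> \<phi>) = tinv (Xc \<phi>)"
proof -
  have "inv\<^bsub>T3\<^esub> \<phi> \<otimes>\<^bsub>T3\<^esub> \<phi> = \<one>\<^bsub>T3\<^esub>" using group.l_inv[OF T3_group] assms by simp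
  then have "\<And>v. (inv\<^bsub>T3\<^esub> \<phi>) v * \<phi> v = 1" by (simp add: fun_eq_iff)
  then have "\<And>v. (inv\<^bsub>T3\<^esub> \<phi>) v = inverse (\<phi> v)" by (metis inverse_unique mult.commute)
  then show ?thesis unfolding Xc_def tinv_def by simp
qed

lemma M3_perm: assumes s: "s permutes UNIV" and v: "v \<in> M3" shows "(\<lambda>i. v (s i)) \<in> M3"
proof -
  have "(\<Sum>i\<in>UNIV. v i) = (\<Sum>i\<in>UNIV. (v \<circ> s) i)" using sum.permute[OF s] by simp
  then show ?thesis using v unfolding M3_def by (simp add: o_def)
qed

lemma tact_eval: assumes s: "s permutes UNIV" and v: "v \<in> M3"
  shows "tact (restrict (mact s 1) M3) \<phi> v = \<phi> (\<lambda>i. v (s i))"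
proof -
  let ?g = "restrict (mact s 1) M3"
  have invs: "inv_into UNIV s (s j) = j" "s (inv_into UNIV s j) = j" for j
    using permutes_inverses[OF s] by (simp_all add: inv_def)
  have inj: "inj_on ?g M3"
  proof (rule inj_onI)
    fix x y assume xy: "x \<in> M3" "y \<in> M3" "?g x = ?g y"
    then have "mact s 1 x = mact s 1 y" by simp
    then have "\<And>i. x (inv_into UNIV s i) = y (inv_into UNIV s i)" unfolding mact_def by (simp add: fun_eq_iff)
    then have "\<And>j. x j = y j" by (metis invs(1))
    then show "x = y" by (simp add: fun_eq_iff)
  qed
  have vs: "(\<lambda>i. v (s i)) \<in> M3" using M3_perm[OF s v] .
  have "?g (\<lambda>i. v (s i)) = v" using vs invs unfolding mact_def by (simp add: fun_eq_iff)
  then have "inv_into M3 ?g v = (\<lambda>i. v (s i))" using inv_into_f_eq[OF inj vs] by simp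
  then show ?thesis using v unfolding tact_def by simp
qed

definition s3 :: "4 \<Rightarrow> 4" where "s3 = transpose 0 1 \<circ> transpose 1 2"
definition sr :: "4 \<Rightarrow> 4" where "sr = transpose 0 3 \<circ> transpose 1 2"

lemma s3_vals: "s3 0 = 1" "s3 1 = 2" "s3 2 = 0"
  by (simp_all add: s3_def distinct4 distinct4[symmetric])
lemma sr_vals: "sr 0 = 3" "sr 1 = 2" "sr 2 = 1"
  by (simp_all add: sr_def distinct4 distinct4[symmetric])

lemma s3_perm: "s3 permutes UNIV" "evenperm s3"
  unfolding s3_def
  by (auto intro!: permutes_compose permutes_swap_id simp: evenperm_comp permutation_swap_id evenperm_swap distinct4)
lemma sr_perm: "sr permutes UNIV" "evenperm sr"
  unfolding sr_def
  by (auto intro!: permutes_compose permutes_swap_id simp: evenperm_comp permutation_swap_id evenperm_swap distinct4)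

lemma W3A_s3: "restrict (mact s3 1) M3 \<in> W3A" unfolding W3A_def using s3_perm by blast
lemma W3A_sr: "restrict (mact sr 1) M3 \<in> W3A" unfolding W3A_def using sr_perm by blast

lemma phi_eval: assumes "\<phi> \<in> T3_points" "w \<in> M3"
  shows "\<phi> w = \<phi> (dv 0) powi w 0 * \<phi> (dv 1) powi w 1 * \<phi> (dv 2) powi w 2"
proof -
  have "\<phi> w = pt (Xc \<phi>) w" using pt_X[OF assms(1)] by simp
  then show ?thesis using assms(2) unfolding pt_def Xc_def by simp
qed

lemma X_rot: assumes "\<phi> \<in> T3_points" shows "Xc (tact (restrict (mact s3 1) M3) \<phi>) = rot (Xc \<phi>)"
proof -
  have e: "tact (restrict (mact s3 1) M3) \<phi> (dv i) = \<phi> (\<lambda>j. dv i (s3 j))" if "dv i \<in> M3" for i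
    using tact_eval[OF s3_perm(1) that] .
  have m: "(\<lambda>j. dv i (s3 j)) \<in> M3" if "dv i \<in> M3" for i using M3_perm[OF s3_perm(1) that] .
  have p: "\<phi> (\<lambda>j. dv i (s3 j)) = \<phi> (dv 0) powi dv i (s3 0) * \<phi> (dv 1) powi dv i (s3 1) * \<phi> (dv 2) powi dv i (s3 2)"
    if "dv i \<in> M3" for i using phi_eval[OF assms m[OF that]] .
  show ?thesis unfolding Xc_def rot_def using dv_M3 e p
    by (simp add: s3_vals dv_vals)
qed

lemma X_rho: assumes "\<phi> \<in> T3_points" shows "Xc (tact (restrict (mact sr 1) M3) \<phi>) = rho (Xc \<phi>)"
proof -
  have e: "tact (restrict (mact sr 1) M3) \<phi> (dv i) = \<phi> (\<lambda>j. dv i (sr j))" if "dv i \<in> M3" for i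
    using tact_eval[OF sr_perm(1) that] .
  have m: "(\<lambda>j. dv i (sr j)) \<in> M3" if "dv i \<in> M3" for i using M3_perm[OF sr_perm(1) that] .
  have p: "\<phi> (\<lambda>j. dv i (sr j)) = \<phi> (dv 0) powi dv i (sr 0) * \<phi> (dv 1) powi dv i (sr 1) * \<phi> (dv 2) powi dv i (sr 2)"
    if "dv i \<in> M3" for i using phi_eval[OF assms m[OF that]] .
  show ?thesis unfolding Xc_def rho_def using dv_M3 e p
    by (simp add: sr_vals dv_vals power_int_minus mult_ac)
qed

lemma pt_tm: "pt (tm y y') = (\<lambda>v. pt y v * pt y' v)"
  unfolding pt_def tm_def by (auto simp: power_int_mult_distrib mult_ac fun_eq_iff)



lemma main_iso:
  assumes sg: "subgroup G T3" and fG: "finite G"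
    and inv3: "\<forall>g\<in>W3A. \<forall>\<phi>\<in>G. tact g \<phi> \<in> G"
  shows "\<exists>n m k. m > 0 \<and> (k = 1 \<or> k = 2 \<or> k = 4) \<and> n = k * m \<and>
           T3\<lparr>carrier := G\<rparr> \<cong> DirProd (mu n) (DirProd (mu n) (mu m))"
proof -
  have GT: "G \<subseteq> T3_points" using subgroup.subset[OF sg] by simp
  define Q where "Q = Xc ` G"
  have Qs: "Qset Q"
  proof
    show "finite Q" unfolding Q_def using fG by simp
    show "(1,1,1) \<in> Q" unfolding Q_def using subgroup.one_closed[OF sg]
      by (force simp: Xc_def)
    fix x y assume "x \<in> Q" "y \<in> Q"
    then obtain \<phi> \<psi> where p: "\<phi> \<in> G" "\<psi> \<in> G" "x = Xc \<phi>" "y = Xc \<psi>" unfolding Q_def by auto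
    have "\<phi> \<otimes>\<^bsub>T3\<^esub> \<psi> \<in> G" using subgroup.m_closed[OF sg p(1,2)] .
    moreover have "Xc (\<phi> \<otimes>\<^bsub>T3\<^esub> \<psi>) = tm x y" using p by (simp add: Xc_def tm_def)
    ultimately show "tm x y \<in> Q" unfolding Q_def by (metis image_eqI)
  next
    fix x assume "x \<in> Q"
    then obtain \<phi> where p: "\<phi> \<in> G" "x = Xc \<phi>" unfolding Q_def by auto
    have "inv\<^bsub>T3\<^esub> \<phi> \<in> G" using subgroup.m_inv_closed[OF sg p(1)] .
    moreover have "Xc (inv\<^bsub>T3\<^esub> \<phi>) = tinv x" using inv_T3 p GT by auto
    ultimately show "tinv x \<in> Q" unfolding Q_def by (metis image_eqI)
  next
    fix x assume "x \<in> Q"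
    then obtain \<phi> where p: "\<phi> \<in> G" "x = Xc \<phi>" unfolding Q_def by auto
    have "tact (restrict (mact s3 1) M3) \<phi> \<in> G" using inv3 W3A_s3 p(1) by blast
    moreover have "Xc (tact (restrict (mact s3 1) M3) \<phi>) = rot x" using X_rot p GT by auto
    ultimately show "rot x \<in> Q" unfolding Q_def by (metis image_eqI)
  next
    fix x assume "x \<in> Q"
    then obtain \<phi> where p: "\<phi> \<in> G" "x = Xc \<phi>" unfolding Q_def by auto
    have "tact (restrict (mact sr 1) M3) \<phi> \<in> G" using inv3 W3A_sr p(1) by blast
    moreover have "Xc (tact (restrict (mact sr 1) M3) \<phi>) = rho x" using X_rho p GT by auto
    ultimately show "rho x \<in> Q" unfolding Q_def by (metis image_eqI)
  next
    fix a b c assume "(a,b,c) \<in> Q"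
    then obtain \<phi> where p: "\<phi> \<in> G" "(a,b,c) = Xc \<phi>" unfolding Q_def by auto
    then have "\<phi> \<in> T3_points" using GT by auto
    then show "a \<noteq> 0 \<and> b \<noteq> 0 \<and> c \<noteq> 0" using p(2) dv_M3 phi_nz unfolding Xc_def by auto
  qed
  define n where "n = Qset.n Q"
  define m where "m = Qset.m Q"
  obtain k where k: "k = 1 \<or> k = 2 \<or> k = 4" "n = k * m" using Qset.k_cases[OF Qs] n_def m_def by blast
  have m0: "m > 0" using Qset.H_props[OF Qs] m_def by simp
  have k0: "k > 0" using k(1) by auto
  have QS: "Q = Sset n m" using Qset.Q_eq[OF Qs] n_def m_def unfolding Sset_def by simp
  have n0: "n > 0" using k m0 k0 by simp
  define F where "F = (\<lambda>x. pt (trip n k x))"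
  let ?D = "DirProd (mu n) (DirProd (mu n) (mu m))"
  have cn: "carrier (mu n) = {0..<int n}" using n0 by (simp add: carrier_integer_mod_group)
  have cm: "carrier (mu m) = {0..<int m}" using m0 by (simp add: carrier_integer_mod_group)
  have carD: "carrier ?D = {0..<int n} \<times> {0..<int n} \<times> {0..<int m}"
    using cn cm by simp
  have trip_nz: "fst (trip n k x) \<noteq> 0 \<and> fst (snd (trip n k x)) \<noteq> 0 \<and> snd (snd (trip n k x)) \<noteq> 0" for x
    unfolding trip_def by simp
  have XF: "Xc (F x) = trip n k x" for x
    using X_pt trip_nz[of x] unfolding F_def by (metis prod.collapse)
  have FG: "F x \<in> G" if "x \<in> carrier ?D" for x
  proof -
    obtain i j l where x: "x = (i,j,l)" by (cases x)
    have "trip n k x \<in> Q" using trip_in[OF k(2) m0 k0] x QS by simp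
    then obtain \<phi> where "\<phi> \<in> G" "trip n k x = Xc \<phi>" unfolding Q_def by auto
    then show ?thesis unfolding F_def using pt_X GT by auto
  qed
  have hom: "F \<in> hom ?D (T3\<lparr>carrier := G\<rparr>)"
  proof (rule homI)
    fix x assume "x \<in> carrier ?D" then show "F x \<in> carrier (T3\<lparr>carrier := G\<rparr>)" using FG by simp
  next
    fix x y assume "x \<in> carrier ?D" "y \<in> carrier ?D"
    obtain i j l where x: "x = (i,j,l)" by (cases x)
    obtain i' j' l' where y: "y = (i',j',l')" by (cases y)
    have "x \<otimes>\<^bsub>?D\<^esub> y = ((i + i') mod int n, (j + j') mod int n, (l + l') mod int m)"
      using x y by simp
    then have "F (x \<otimes>\<^bsub>?D\<^esub> y) = pt (tm (trip n k x) (trip n k y))"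
      unfolding F_def using trip_hom[OF k(2) m0 k0] x y by simp
    then show "F (x \<otimes>\<^bsub>?D\<^esub> y) = F x \<otimes>\<^bsub>T3\<lparr>carrier := G\<rparr>\<^esub> F y"
      unfolding F_def by (simp add: pt_tm)
  qed
  have inj: "inj_on F (carrier ?D)"
  proof (rule inj_onI)
    fix x y assume xy: "x \<in> carrier ?D" "y \<in> carrier ?D" "F x = F y"
    obtain i j l where x: "x = (i,j,l)" by (cases x)
    obtain i' j' l' where y: "y = (i',j',l')" by (cases y)
    have "trip n k x = trip n k y" using XF xy(3) by metis
    moreover have "(i,j,l) \<in> {0..<int n} \<times> {0..<int n} \<times> {0..<int m}" using xy(1) x cn cm by simp
    moreover have "(i',j',l') \<in> {0..<int n} \<times> {0..<int n} \<times> {0..<int m}" using xy(2) y cn cm by simp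
    ultimately show "x = y" using trip_inj[OF k(2) m0 k0, of i j l i' j' l'] x y by auto
  qed
  have img: "F ` carrier ?D = G"
  proof
    show "F ` carrier ?D \<subseteq> G" using FG by auto
    show "G \<subseteq> F ` carrier ?D"
    proof
      fix \<phi> assume p: "\<phi> \<in> G"
      have "Xc \<phi> \<in> Sset n m" using p QS unfolding Q_def by auto
      then obtain i j l where ijl: "0 \<le> i" "i < int n" "0 \<le> j" "j < int n" "0 \<le> l" "l < int m"
        "trip n k (i,j,l) = Xc \<phi>" using trip_surj[OF k(2) m0 k0] by blast
      have "F (i,j,l) = \<phi>" unfolding F_def using ijl(7) pt_X p GT by auto
      moreover have "(i,j,l) \<in> carrier ?D" using carD ijl by auto
      ultimately show "\<phi> \<in> F ` carrier ?D" by (metis image_eqI)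
    qed
  qed
  have "F \<in> iso ?D (T3\<lparr>carrier := G\<rparr>)"
    using hom inj img by (simp add: iso_def bij_betw_def)
  then have "?D \<cong> T3\<lparr>carrier := G\<rparr>" by (rule is_isoI)
  moreover have "group ?D" by (intro DirProd_group group_integer_mod_group)
  ultimately have "T3\<lparr>carrier := G\<rparr> \<cong> ?D" using group.iso_sym by blast
  then show ?thesis using m0 k by blast
qed

theorem corollary7p3:
  fixes W :: "((4 \<Rightarrow> int) \<Rightarrow> (4 \<Rightarrow> int)) set"
    and G :: "((4 \<Rightarrow> int) \<Rightarrow> complex) set"
  assumes "is_subgroup_W3 W"
    and "W3A \<subseteq> W"
    and "subgroup G T3"
    and "finite G"
    and "\<forall>g\<in>W. \<forall>\<phi>\<in>G. tact g \<phi> \<in> G"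
  shows "\<exists>n::nat. 0 < n \<and>
     (T3\<lparr>carrier := G\<rparr> \<cong> DirProd (mu n) (DirProd (mu n) (mu n))
      \<or> (even n \<and> T3\<lparr>carrier := G\<rparr> \<cong> DirProd (mu n) (DirProd (mu n) (mu (n div 2))))
      \<or> (4 dvd n \<and> T3\<lparr>carrier := G\<rparr> \<cong> DirProd (mu n) (DirProd (mu n) (mu (n div 4)))))"
proof -
  have "\<forall>g\<in>W3A. \<forall>\<phi>\<in>G. tact g \<phi> \<in> G" using assms(2,5) by blast
  then obtain n m k where h: "m > 0" "k = 1 \<or> k = 2 \<or> k = 4" "n = k * m"
    "T3\<lparr>carrier := G\<rparr> \<cong> DirProd (mu n) (DirProd (mu n) (mu m))"
    using main_iso[OF assms(3,4)] by blast
  have n0: "0 < n" using h by auto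
  from h(2) show ?thesis
  proof (elim disjE)
    assume "k = 1" then show ?thesis using h n0 by auto
  next
    assume "k = 2"
    then have "even n" "n div 2 = m" using h by auto
    then show ?thesis using h n0 by metis
  next
    assume "k = 4"
    then have "4 dvd n" "n div 4 = m" using h by auto
    then show ?thesis using h n0 by metis
  qed
qed

end
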